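(* Let $\mathcal A\subset\mathbb R^n$ be compact with diameter $D_{\mathcal A}<\infty$ and let $\mathcal X=\mathrm{conv}(\mathcal A)$ be $\alpha$-strongly convex for some $\alpha>0$. Let $f$ be convex and differentiable with $L$-Lipschitz gradient. Let $\{x_t\}_{t\ge0}$ be generated by the AC-FW algorithm with the closed-loop Frank-Wolfe subroutine and a damping sequence satisfying Condition (D), let $\eta\in(1,2)$, and let $\{h_t\}_{t\ge0}$ denote the elements of $\mathcal G\cap\mathcal I_\eta$ in increasing order. (i) If in addition $f$ is $\mu$-strongly convex for some $\mu>0$, then for any $t\ge0$, $$f(x_{h_t})-f(x^\star)\le\frac{\max\left\{\frac{LD_{\mathcal A}^2}{2},\ 18\left(\frac{1}{1+\sqrt{\eta/2}}\right)^2\left(\frac{\alpha\sqrt\mu}{8\sqrt2 L}\right)^{-2}\right\}\left(\frac{1}{1-\sqrt{\eta/2}}\right)^2}{\left(t+\frac{1}{1-\sqrt{\eta/2}}\right)^2}.$$ (ii) If in addition there is $g>0$ with $\|\nabla f(x)\|_2\ge g$ for all $x\in\mathcal X$, then for any $t\ge0$, $$f(x_{h_t})-f(x^\star)\le\frac{LD_{\mathcal A}^2}{2}\left(\max\left\{\frac{\eta}{2},\ 1-\left(1-\frac{\eta}{2}\right)\frac{\alpha g}{8L}\right\}\right)^t.$$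
   Context: $D_{\mathcal A}:=\sup_{x,y\in\mathcal A}\|x-y\|_2$; $\|\nabla f(x)-\nabla f(y)\|_2\le L\|x-y\|_2$ for all $x,y\in\mathbb R^n$. $x^\star$ is an optimal solution of $\min_{x\in\mathcal X}f(x)$. $\mathcal X$ is $\alpha$-strongly convex if for all $\rho\in[0,1]$, $x,y\in\mathcal X$ and $z\in\mathbb R^n$ with $\|z\|_2\le1$: $\rho x+(1-\rho)y+\frac{\rho(1-\rho)\alpha\|x-y\|_2^2}{2}z\in\mathcal X$. $f$ is $\mu$-strongly convex if $f(y)\ge f(x)+\nabla f(x)^\top(y-x)+\frac\mu2\|y-x\|_2^2$ for all $x,y$. For $x\ne y$, $\ell(x,y):=2|f(y)-f(x)-\nabla f(x)^\top(y-x)|/\|y-x\|_2^2$, $\ell(x,x):=0$. AC-FW algorithm with closed-loop Frank-Wolfe subroutine: given $\{r_t\}_{t\ge0}$, pick $x_{-1}\in\mathcal A$, $x_0\in\arg\min_{v\in\mathcal A}\nabla f(x_{-1})^\top v$, $L_0:=\ell(x_{-1},x_0)$. For $t=0,1,\dots$: $v_t\in\arg\min_{v\in\mathcal A}\nabla f(x_t)^\top v$; $d_t:=x_t-v_t$, $\gamma_t^{\max}:=1$; $\gamma_t:=\min\{\nabla f(x_t)^\top d_t/(L_t\|d_t\|_2^2),\gamma_t^{\max}\}$; $\bar x_{t+1}:=x_t-\gamma_td_t$; $L_{t+1}:=\max\{\ell(x_t,\bar x_{t+1}),r_tL_t\}$; $x_{t+1}:=\bar x_{t+1}$ if $f(\bar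 x_{t+1})<f(x_t)$, else $x_{t+1}:=x_t$. $\mathcal I_\eta:=\{t\ge0:L_{t+1}\le\eta L_t\}$; $\mathcal G:=\{t\ge0:\gamma_t^{\max}\ge1\text{ or }\gamma_t<\gamma_t^{\max}\}$ (here $\mathcal G=\mathbb Z_+$, so $\mathcal G\cap\mathcal I_\eta=\mathcal I_\eta$). Condition (D): $r_t\in(0,1]$ for all $t$ and $\prod_{t\ge0}r_t\in(0,1]$. *)

theory Defs
  imports "HOL-Analysis.Analysis"
begin

definition strongly_convex_set :: "real \<Rightarrow> 'a::euclidean_space set \<Rightarrow> bool" where
  "strongly_convex_set \<alpha> X \<longleftrightarrow>
     (\<forall>\<rho>\<in>{0..1}. \<forall>x\<in>X. \<forall>y\<in>X. \<forall>z. norm z \<le> 1 \<longrightarrow>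
        \<rho> *\<^sub>R x + (1 - \<rho>) *\<^sub>R y + (\<rho> * (1 - \<rho>) * \<alpha> * (norm (x - y))\<^sup>2 / 2) *\<^sub>R z \<in> X)"

definition strongly_convex_fun ::
    "real \<Rightarrow> ('a::euclidean_space \<Rightarrow> real) \<Rightarrow> ('a \<Rightarrow> 'a) \<Rightarrow> bool" where
  "strongly_convex_fun \<mu> f grad \<longleftrightarrow>
     (\<forall>x y. f y \<ge> f x + grad x \<bullet> (y - x) + \<mu> / 2 * (norm (y - x))\<^sup>2)"

definition ell :: "('a::euclidean_space \<Rightarrow> real) \<Rightarrow> ('a \<Rightarrow> 'a) \<Rightarrow> 'a \<Rightarrow> 'a \<Rightarrow> real" where
  "ell f grad x y = (if x = y then 0
      else 2 * \<bar>f y - f x - grad x \<bullet> (y - x)\<bar> / (norm (y - x))\<^sup>2)"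

end

theory Submission
  imports Defs
begin

lemma line_deriv:
  fixes f :: "'a::euclidean_space \<Rightarrow> real"
  assumes "\<And>y. (f has_derivative (\<lambda>h. grad y \<bullet> h)) (at y)"
  shows "((\<lambda>t. f (x + t *\<^sub>R d)) has_real_derivative (grad (x + t *\<^sub>R d) \<bullet> d)) (at t)"
proof -
  have l: "((\<lambda>t. x + t *\<^sub>R d) has_derivative (\<lambda>s. s *\<^sub>R d)) (at t)"
    by (auto intro!: derivative_eq_intros)
  have "((\<lambda>t. f (x + t *\<^sub>R d)) has_derivative (\<lambda>s. grad (x + t *\<^sub>R d) \<bullet> (s *\<^sub>R d))) (at t)"
    using has_derivative_compose[OF l assms] by (simp add: o_def)
  moreover have "(\<lambda>s. grad (x + t *\<^sub>R d) \<bullet> (s *\<^sub>R d)) = (*) (grad (x + t *\<^sub>R d) \<bullet> d)"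
    by (auto simp: fun_eq_iff)
  ultimately show ?thesis by (simp add: has_field_derivative_def)
qed

lemma grad_ineq:
  fixes f :: "'a::euclidean_space \<Rightarrow> real"
  assumes cv: "convex_on UNIV f"
    and dg: "\<And>y. (f has_derivative (\<lambda>h. grad y \<bullet> h)) (at y)"
  shows "f x + grad x \<bullet> (y - x) \<le> f y"
proof -
  define \<phi> where "\<phi> = (\<lambda>t::real. f (x + t *\<^sub>R (y - x)))"
  have "convex_on UNIV \<phi>"
  proof (rule convex_onI)
    fix t a b :: real assume "0 < t" "t < 1"
    have "\<phi> ((1 - t) *\<^sub>R a + t *\<^sub>R b) = f ((1 - t) *\<^sub>R (x + a *\<^sub>R (y - x)) + t *\<^sub>R (x + b *\<^sub>R (y - x)))"
      unfolding \<phi>_def by (simp add: algebra_simps)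
    also have "\<dots> \<le> (1 - t) * \<phi> a + t * \<phi> b"
      unfolding \<phi>_def using convex_onD[OF cv] \<open>0 < t\<close> \<open>t < 1\<close> by simp
    finally show "\<phi> ((1 - t) *\<^sub>R a + t *\<^sub>R b) \<le> (1 - t) * \<phi> a + t * \<phi> b" .
  qed simp
  moreover have "(\<phi> has_field_derivative (grad x \<bullet> (y - x))) (at 0 within UNIV)"
    unfolding \<phi>_def using line_deriv[OF dg, of x "y - x" 0] by simp
  ultimately have "\<phi> 1 - \<phi> 0 \<ge> (grad x \<bullet> (y - x)) * (1 - 0)"
    by (intro convex_on_imp_above_tangent) auto
  then show ?thesis unfolding \<phi>_def by simp
qed

lemma descent:
  fixes f :: "'a::euclidean_space \<Rightarrow> real"
  assumes dg: "\<And>y. (f has_derivative (\<lambda>h. grad y \<bullet> h)) (at y)"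
    and lip: "\<And>y z. norm (grad y - grad z) \<le> L * norm (y - z)"
  shows "f y - f x - grad x \<bullet> (y - x) \<le> L / 2 * (norm (y - x))\<^sup>2"
proof -
  define d where "d = y - x"
  define \<psi> where "\<psi> = (\<lambda>t::real. f (x + t *\<^sub>R d) - t * (grad x \<bullet> d) - L * t^2 * (norm d)\<^sup>2 / 2)"
  have "\<psi> 1 \<le> \<psi> 0"
  proof (rule DERIV_nonpos_imp_nonincreasing[of 0 1 \<psi>])
    fix t :: real assume t: "0 \<le> t" "t \<le> 1"
    have D: "(\<psi> has_real_derivative (grad (x + t *\<^sub>R d) \<bullet> d - grad x \<bullet> d - L * t * (norm d)\<^sup>2)) (at t)"
      unfolding \<psi>_def
      by (rule derivative_eq_intros line_deriv[OF dg] | simp)+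
    have "grad (x + t *\<^sub>R d) \<bullet> d - grad x \<bullet> d = (grad (x + t *\<^sub>R d) - grad x) \<bullet> d"
      by (simp add: inner_diff_left)
    also have "\<dots> \<le> norm (grad (x + t *\<^sub>R d) - grad x) * norm d"
      by (rule norm_cauchy_schwarz)
    also have "\<dots> \<le> (L * norm (t *\<^sub>R d)) * norm d"
      using lip[of "x + t *\<^sub>R d" x] by (intro mult_right_mono) auto
    also have "\<dots> = L * t * (norm d)\<^sup>2" using t by (simp add: power2_eq_square)
    finally show "\<exists>y. (\<psi> has_real_derivative y) (at t) \<and> y \<le> 0"
      using D by (intro exI[of _ "grad (x + t *\<^sub>R d) \<bullet> d - grad x \<bullet> d - L * t * (norm d)\<^sup>2"]) auto
  qed simp
  then show ?thesis unfolding \<psi>_def d_def by simp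
qed


lemma sc_gap:
  fixes g x v :: "'a::euclidean_space"
  assumes sc: "strongly_convex_set \<alpha> C" and x: "x \<in> C" and v: "v \<in> C"
    and vmin: "\<And>u. u \<in> C \<Longrightarrow> g \<bullet> v \<le> g \<bullet> u"
  shows "\<alpha> / 4 * (norm (x - v))\<^sup>2 * norm g \<le> g \<bullet> (x - v)"
proof (cases "g = 0")
  case True then show ?thesis by simp
next
  case False
  define z where "z = - (1 / norm g) *\<^sub>R g"
  have nz: "norm z \<le> 1" using False by (simp add: z_def)
  define p where "p = (1/2::real) *\<^sub>R x + (1 - 1/2) *\<^sub>R v + ((1/2) * (1 - 1/2) * \<alpha> * (norm (x - v))\<^sup>2 / 2) *\<^sub>R z"
  have "p \<in> C" unfolding p_def by (rule sc[unfolded strongly_convex_set_def, rule_format]) (use x v nz in auto)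
  then have "g \<bullet> v \<le> g \<bullet> p" by (rule vmin)
  also have "g \<bullet> p = (1/2) * (g \<bullet> x) + (1/2) * (g \<bullet> v) - \<alpha> / 8 * (norm (x - v))\<^sup>2 * norm g"
    using False by (simp add: p_def z_def inner_add_right algebra_simps dot_square_norm power2_eq_square)
  finally show ?thesis by (simp add: inner_diff_right algebra_simps)
qed

lemma hull_halfspace:
  fixes g v :: "'a::euclidean_space"
  assumes "\<And>u. u \<in> A \<Longrightarrow> g \<bullet> v \<le> g \<bullet> u" and "u \<in> convex hull A"
  shows "g \<bullet> v \<le> g \<bullet> u"
proof -
  have "convex hull A \<subseteq> {u. g \<bullet> u \<ge> g \<bullet> v}"
    by (rule hull_minimal) (use assms(1) convex_halfspace_ge in auto)
  then show ?thesis using assms(2) by auto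
qed

lemma hull_diam:
  fixes v :: "'a::euclidean_space"
  assumes "bounded A" "v \<in> A" "u \<in> convex hull A"
  shows "norm (u - v) \<le> diameter A"
proof -
  have "A \<subseteq> cball v (diameter A)"
    using diameter_bounded_bound[OF assms(1) assms(2)] by (auto simp: dist_commute)
  then have "convex hull A \<subseteq> cball v (diameter A)"
    by (rule hull_minimal) simp
  then show ?thesis using assms(3) by (auto simp: dist_norm norm_minus_commute)
qed

lemma track:
  fixes H B :: "nat \<Rightarrow> real" and I :: "nat \<Rightarrow> bool"
  assumes "H 0 \<le> B 0" "\<And>k. H (Suc k) \<le> H k"
    "\<And>k n. I k \<Longrightarrow> H k \<le> B n \<Longrightarrow> H (Suc k) \<le> B (Suc n)"
  shows "H k \<le> B (card {j. j < k \<and> I j})"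
proof (induction k)
  case 0 then show ?case using assms(1) by simp
next
  case (Suc k)
  show ?case
  proof (cases "I k")
    case True
    have "{j. j < Suc k \<and> I j} = insert k {j. j < k \<and> I j}" using True by auto
    then have "card {j. j < Suc k \<and> I j} = Suc (card {j. j < k \<and> I j})" by simp
    then show ?thesis using assms(3)[OF True Suc] by simp
  next
    case False
    have "{j. j < Suc k \<and> I j} = {j. j < k \<and> I j}" using False less_Suc_eq by auto
    then show ?thesis using assms(2)[of k] Suc by simp
  qed
qed

lemma rate_i:
  fixes h h' s M K c :: real and n :: nat
  assumes s: "0 \<le> s" "s < 1" and c: "c = 1 / (1 - s)" and M: "M > 0" and K: "K \<ge> 0"
    and W: "36 \<le> K\<^sup>2 * M * c\<^sup>2"
    and h: "0 \<le> h" "h' \<le> h" "h \<le> M * c\<^sup>2 / (real n + c)\<^sup>2"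
    and cases: "h' \<le> s\<^sup>2 * h \<or> h' \<le> h - K * h * sqrt h"
  shows "h' \<le> M * c\<^sup>2 / (real (Suc n) + c)\<^sup>2"
proof -
  define u where "u = real n + c"
  have c1: "c \<ge> 1" using s by (simp add: c le_divide_eq)
  have u1: "u \<ge> 1" using c1 by (simp add: u_def)
  have sc: "s * c = c - 1" using s c by (simp add: field_simps)
  have uS: "real (Suc n) + c = u + 1" by (simp add: u_def)
  define B0 where "B0 = M * c\<^sup>2 / u\<^sup>2"
  define B1 where "B1 = M * c\<^sup>2 / (u + 1)\<^sup>2"
  have B1pos: "B1 \<ge> 0" using M by (simp add: B1_def)
  show ?thesis unfolding uS B1_def[symmetric]
  proof (cases "h' \<le> s\<^sup>2 * h")
    case True
    have "s * (u + 1) \<le> u" using sc s by (simp add: u_def algebra_simps) (smt (verit) mult_left_le_one_le of_nat_0_le_iff)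
    then have "(s * (u + 1))\<^sup>2 \<le> u\<^sup>2" using s u1 by (intro power_mono) auto
    then have "s\<^sup>2 * (u + 1)\<^sup>2 \<le> u\<^sup>2" by (simp add: power_mult_distrib)
    then have q: "s\<^sup>2 / u\<^sup>2 \<le> 1 / (u + 1)\<^sup>2" using u1 by (simp add: field_simps)
    have "s\<^sup>2 * B0 = M * c\<^sup>2 * (s\<^sup>2 / u\<^sup>2)" by (simp add: B0_def)
    also have "\<dots> \<le> M * c\<^sup>2 * (1 / (u + 1)\<^sup>2)" using q M by (intro mult_left_mono) auto
    also have "\<dots> = B1" by (simp add: B1_def)
    finally have "s\<^sup>2 * B0 \<le> B1" .
    moreover have "s\<^sup>2 * h \<le> s\<^sup>2 * B0" using h(3) unfolding B0_def u_def by (intro mult_left_mono) auto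
    ultimately show "h' \<le> B1" using True by linarith
  next
    case False
    with cases have hK: "h' \<le> h - K * h * sqrt h" by auto
    show "h' \<le> B1"
    proof (cases "h \<le> B1")
      case True then show ?thesis using h by linarith
    next
      case False
      have W6: "6 \<le> K * sqrt M * c"
      proof -
        have "sqrt 36 \<le> sqrt (K\<^sup>2 * M * c\<^sup>2)" using W by (rule real_sqrt_le_mono)
        also have "\<dots> = K * sqrt M * c" using K c1 M by (simp add: real_sqrt_mult)
        finally show ?thesis by simp
      qed
      have sB1: "sqrt B1 = sqrt M * c / (u + 1)" using c1 u1 M
        by (simp add: B1_def real_sqrt_divide real_sqrt_mult)
      have "sqrt h \<ge> sqrt B1" using False by simp
      then have sh: "sqrt h \<ge> sqrt M * c / (u + 1)" using sB1 by simp
      have "K * h * sqrt h \<ge> K * B1 * (sqrt M * c / (u + 1))"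
        using False sh K B1pos M c1 u1 by (intro mult_mono) (auto intro: mult_left_mono)
      then have "h' \<le> B0 - K * B1 * (sqrt M * c / (u + 1))"
        using hK h(3) unfolding B0_def u_def by linarith
      also have "\<dots> = M * c\<^sup>2 * (1 / u\<^sup>2 - (K * sqrt M * c) / (u + 1)^3)"
        unfolding B0_def B1_def using u1 by (simp add: field_simps power2_eq_square power3_eq_cube)
      also have "\<dots> \<le> M * c\<^sup>2 * (1 / (u+1)\<^sup>2)"
      proof (rule mult_left_mono)
        have "(u + 1)^3 \<le> u\<^sup>2 * (u + 1 + 6)"
        proof -
          have uu: "u * 1 \<le> u * u" using u1 by (intro mult_left_mono) auto
          have e: "u * (u * 4) = 4 * (u * u)" by simp
          have "1 + u * 3 \<le> u * (u * 4)" unfolding e using uu u1 by linarith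
          then show ?thesis using u1 by (simp add: power2_eq_square power3_eq_cube algebra_simps)
        qed
        also have "\<dots> \<le> u\<^sup>2 * (u + 1 + K * sqrt M * c)" using W6 by (intro mult_left_mono) auto
        finally have *: "(u + 1)^3 \<le> u\<^sup>2 * (u + 1 + K * sqrt M * c)" .
        show "1 / u\<^sup>2 - K * sqrt M * c / (u + 1) ^ 3 \<le> 1 / (u + 1)\<^sup>2"
        proof -
          define W where "W = K * sqrt M * c"
          have pu: "u\<^sup>2 * (u + 1)^3 > 0" using u1 by simp
          have e1: "1 / u\<^sup>2 - W / (u + 1)^3 = ((u + 1)^3 - W * u\<^sup>2) / (u\<^sup>2 * (u + 1)^3)"
            using u1 by (simp add: field_simps)
          have e2: "1 / (u + 1)\<^sup>2 = (u\<^sup>2 * (u + 1)) / (u\<^sup>2 * (u + 1)^3)"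
          proof -
            have "u\<^sup>2 * (u + 1)^3 = (u\<^sup>2 * (u + 1)) * (u + 1)\<^sup>2" by algebra
            then show ?thesis using u1 by simp
          qed
          have "(u + 1)^3 - W * u\<^sup>2 \<le> u\<^sup>2 * (u + 1)" using * unfolding W_def by (simp add: algebra_simps)
          then have "1 / u\<^sup>2 - W / (u + 1)^3 \<le> 1 / (u + 1)\<^sup>2"
            unfolding e1 e2 using pu by (intro divide_right_mono) auto
          then show ?thesis by (simp add: W_def)
        qed
      qed (use M in simp)
      also have "\<dots> = B1" by (simp add: B1_def)
      finally show ?thesis .
    qed
  qed
qed


lemma ell_bound:
  fixes f :: "'a::euclidean_space \<Rightarrow> real"
  shows "f b - f a - grad a \<bullet> (b - a) \<le> ell f grad a b / 2 * (norm (b - a))\<^sup>2"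
proof (cases "a = b")
  case True then show ?thesis by (simp add: ell_def)
next
  case False
  then have "norm (b - a) > 0" by simp
  then show ?thesis using False by (simp add: ell_def)
qed

lemma ell_le:
  fixes f :: "'a::euclidean_space \<Rightarrow> real"
  assumes cv: "convex_on UNIV f"
    and dg: "\<And>y. (f has_derivative (\<lambda>h. grad y \<bullet> h)) (at y)"
    and lip: "\<And>y z. norm (grad y - grad z) \<le> L * norm (y - z)"
    and ne: "a \<noteq> b"
  shows "ell f grad a b \<le> L"
proof -
  have n: "(norm (b - a))\<^sup>2 > 0" using ne by simp
  have lo: "0 \<le> f b - f a - grad a \<bullet> (b - a)" using grad_ineq[OF cv dg, of a b] by simp
  have up: "f b - f a - grad a \<bullet> (b - a) \<le> L / 2 * (norm (b - a))\<^sup>2" by (rule descent[OF dg lip])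
  have "ell f grad a b = 2 * (f b - f a - grad a \<bullet> (b - a)) / (norm (b - a))\<^sup>2"
    using ne lo by (simp add: ell_def)
  also have "\<dots> \<le> L" using up n by (simp add: divide_le_eq)
  finally show ?thesis .
qed


theorem theorem3:
  fixes A :: "'a::euclidean_space set"
    and f :: "'a \<Rightarrow> real" and grad :: "'a \<Rightarrow> 'a"
    and L \<alpha> \<eta> :: real
    and r :: "nat \<Rightarrow> real"
    and xm1 :: 'a and x v :: "nat \<Rightarrow> 'a" and Lt :: "nat \<Rightarrow> real"
    and xstar :: 'a
  assumes compactA: "compact A"
    and alpha_pos: "\<alpha> > 0"
    and sc_set: "strongly_convex_set \<alpha> (convex hull A)"
    and f_convex: "convex_on UNIV f"
    and f_grad: "\<And>y. (f has_derivative (\<lambda>h. grad y \<bullet> h)) (at y)"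
    and lipschitz: "\<And>y z. norm (grad y - grad z) \<le> L * norm (y - z)"
    and xstar_in: "xstar \<in> convex hull A"
    and xstar_opt: "\<And>y. y \<in> convex hull A \<Longrightarrow> f xstar \<le> f y"
    \<comment> \<open>Condition (D)\<close>
    and r_range: "\<And>t. 0 < r t \<and> r t \<le> 1"
    and r_prod: "\<exists>p. 0 < p \<and> p \<le> 1 \<and> (\<lambda>T. \<Prod>t<T. r t) \<longlonglongrightarrow> p"
    \<comment> \<open>initialisation\<close>
    and xm1_in: "xm1 \<in> A"
    and x0_in: "x 0 \<in> A"
    and x0_min: "\<And>u. u \<in> A \<Longrightarrow> grad xm1 \<bullet> x 0 \<le> grad xm1 \<bullet> u"
    and L0: "Lt 0 = ell f grad xm1 (x 0)"
    and L0_pos: "Lt 0 > 0"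
    \<comment> \<open>iteration\<close>
    and v_in: "\<And>t. v t \<in> A"
    and v_min: "\<And>t u. u \<in> A \<Longrightarrow> grad (x t) \<bullet> v t \<le> grad (x t) \<bullet> u"
    and step: "\<And>t. let d = x t - v t;
                      \<gamma> = min ((grad (x t) \<bullet> d) / (Lt t * (norm d)\<^sup>2)) 1;
                      xb = x t - \<gamma> *\<^sub>R d
                  in Lt (Suc t) = max (ell f grad (x t) xb) (r t * Lt t)
                   \<and> x (Suc t) = (if f xb < f (x t) then xb else x t)"
    and eta: "1 < \<eta>" "\<eta> < 2"
  shows
    "(\<forall>\<mu>>0. strongly_convex_fun \<mu> f grad \<longrightarrow>
        (\<forall>k. Lt (Suc k) \<le> \<eta> * Lt k \<longrightarrow>
          (let t = card {j. j < k \<and> Lt (Suc j) \<le> \<eta> * Lt j};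
               c = 1 / (1 - sqrt (\<eta> / 2))
           in f (x k) - f xstar \<le>
              max (L * (diameter A)\<^sup>2 / 2)
                  (18 * (1 / (1 + sqrt (\<eta> / 2)))\<^sup>2
                      * (1 / ((\<alpha> * sqrt \<mu>) / (8 * sqrt 2 * L))\<^sup>2))
              * c\<^sup>2 / (real t + c)\<^sup>2)))
   \<and> (\<forall>g>0. (\<forall>y\<in>convex hull A. norm (grad y) \<ge> g) \<longrightarrow>
        (\<forall>k. Lt (Suc k) \<le> \<eta> * Lt k \<longrightarrow>
          (let t = card {j. j < k \<and> Lt (Suc j) \<le> \<eta> * Lt j}
           in f (x k) - f xstar \<le>
              L * (diameter A)\<^sup>2 / 2
              * (max (\<eta> / 2) (1 - (1 - \<eta> / 2) * \<alpha> * g / (8 * L))) ^ t)))"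
proof -
  define d where "d k = x k - v k" for k
  define gam where "gam k = min ((grad (x k) \<bullet> d k) / (Lt k * (norm (d k))\<^sup>2)) 1" for k
  define xb where "xb k = x k - gam k *\<^sub>R d k" for k
  have st: "Lt (Suc k) = max (ell f grad (x k) (xb k)) (r k * Lt k)
            \<and> x (Suc k) = (if f (xb k) < f (x k) then xb k else x k)" for k
    using step[of k] unfolding Let_def gam_def xb_def d_def by simp
  have bA: "bounded A" using compactA by (rule compact_imp_bounded)
  have vhull: "grad (x k) \<bullet> v k \<le> grad (x k) \<bullet> u" if "u \<in> convex hull A" for k u
    by (rule hull_halfspace[OF v_min that])
  have Lpos: "Lt k > 0" for k
  proof (induction k)
    case 0 then show ?case using L0_pos by simp
  next
    case (Suc k)
    have "r k * Lt k > 0" using r_range[of k] Suc by simp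
    then show ?case using st[of k] by linarith
  qed
  have Gnn: "0 \<le> grad (x k) \<bullet> d k" if "x k \<in> convex hull A" for k
    using vhull[OF that, of k] by (simp add: d_def inner_diff_right)
  have gam01: "0 \<le> gam k \<and> gam k \<le> 1" if "x k \<in> convex hull A" for k
    using Gnn[OF that] Lpos[of k] by (simp add: gam_def)
  have xin: "x k \<in> convex hull A" for k
  proof (induction k)
    case 0 then show ?case by (rule hull_inc[OF x0_in])
  next
    case (Suc k)
    have v: "v k \<in> convex hull A" by (rule hull_inc[OF v_in])
    have "xb k = (1 - gam k) *\<^sub>R x k + gam k *\<^sub>R v k"
      by (simp add: xb_def d_def algebra_simps)
    also have "\<dots> \<in> convex hull A"
      using gam01[OF Suc] Suc v by (intro convexD) (auto simp: convex_convex_hull)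
    finally show ?case using st[of k] Suc by simp
  qed
  have mono: "f (x (Suc k)) \<le> f (x k)" for k using st[of k] by simp
  have monob: "f (x (Suc k)) \<le> f (xb k)" for k using st[of k] by simp
  have hnn: "f xstar \<le> f (x k)" for k using xstar_opt[OF xin] .
  have xne: "xm1 \<noteq> x 0" using L0_pos L0 by (auto simp: ell_def)
  have LgeL0: "Lt 0 \<le> L" using L0 ell_le[OF f_convex f_grad lipschitz xne] by simp
  have Lp: "L > 0" using LgeL0 L0_pos by linarith
  have ellL: "ell f grad a b \<le> L" for a b
    using ell_le[OF f_convex f_grad lipschitz, of a b] Lp by (cases "a = b") (auto simp: ell_def)
  have Lle: "Lt k \<le> L" for k
  proof (induction k)
    case 0 then show ?case using LgeL0 .
  next
    case (Suc k)
    have "r k * Lt k \<le> Lt k" using r_range[of k] Lpos[of k] by (simp add: mult_le_cancel_right1)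
    then show ?case using st[of k] ellL[of "x k" "xb k"] Suc by simp
  qed
  have diam: "norm (u - w) \<le> diameter A" if "w \<in> A" "u \<in> convex hull A" for u w
    by (rule hull_diam[OF bA that])
  have base: "f (x 0) - f xstar \<le> L * (diameter A)\<^sup>2 / 2"
  proof -
    have "norm (x 0 - xm1) \<le> diameter A" by (rule diam[OF xm1_in hull_inc[OF x0_in]])
    then have n2: "(norm (x 0 - xm1))\<^sup>2 \<le> (diameter A)\<^sup>2" by (intro power_mono) auto
    have de: "f (x 0) - f xm1 - grad xm1 \<bullet> (x 0 - xm1) \<le> L / 2 * (norm (x 0 - xm1))\<^sup>2"
      by (rule descent[OF f_grad lipschitz])
    have "L / 2 * (norm (x 0 - xm1))\<^sup>2 \<le> L / 2 * (diameter A)\<^sup>2" using n2 Lp by simp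
    moreover have "grad xm1 \<bullet> x 0 \<le> grad xm1 \<bullet> xstar" by (rule hull_halfspace[OF x0_min xstar_in])
    moreover have "f xm1 + grad xm1 \<bullet> (xstar - xm1) \<le> f xstar" by (rule grad_ineq[OF f_convex f_grad])
    ultimately show ?thesis using de by (simp add: inner_diff_right)
  qed
  have key: "f (x (Suc k)) - f xstar \<le> \<eta> / 2 * (f (x k) - f xstar)
       \<or> f (x (Suc k)) - f xstar \<le> (f (x k) - f xstar)
            - (1 - \<eta> / 2) * \<alpha> * norm (grad (x k)) / (4 * L) * (f (x k) - f xstar)"
    if I: "Lt (Suc k) \<le> \<eta> * Lt k" for k
  proof -
    define h where "h = f (x k) - f xstar"
    define h' where "h' = f (x (Suc k)) - f xstar"
    define G where "G = grad (x k) \<bullet> d k"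
    define Lk where "Lk = Lt k"
    define ng where "ng = norm (grad (x k))"
    have h0: "0 \<le> h" using hnn[of k] by (simp add: h_def)
    have hh': "h' \<le> h" using mono[of k] by (simp add: h_def h'_def)
    have hb: "h' \<le> f (xb k) - f xstar" using monob[of k] by (simp add: h'_def)
    have hG: "h \<le> G"
    proof -
      have "f (x k) + grad (x k) \<bullet> (xstar - x k) \<le> f xstar" by (rule grad_ineq[OF f_convex f_grad])
      moreover have "grad (x k) \<bullet> v k \<le> grad (x k) \<bullet> xstar" by (rule vhull[OF xstar_in])
      ultimately show ?thesis by (simp add: h_def G_def d_def inner_diff_right)
    qed
    have Gsc: "\<alpha> / 4 * (norm (d k))\<^sup>2 * ng \<le> G"
      unfolding G_def ng_def d_def
      by (rule sc_gap[OF sc_set xin hull_inc[OF v_in] vhull])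
    have Lk0: "Lk > 0" using Lpos by (simp add: Lk_def)
    have LkL: "Lk \<le> L" using Lle by (simp add: Lk_def)
    have desc: "f (xb k) \<le> f (x k) - gam k * G + \<eta> * Lk / 2 * ((gam k)\<^sup>2 * (norm (d k))\<^sup>2)"
    proof -
      have e1: "f (xb k) - f (x k) - grad (x k) \<bullet> (xb k - x k) \<le> ell f grad (x k) (xb k) / 2 * (norm (xb k - x k))\<^sup>2"
        by (rule ell_bound)
      have "ell f grad (x k) (xb k) \<le> \<eta> * Lk" using st[of k] I by (simp add: Lk_def)
      then have "ell f grad (x k) (xb k) / 2 * (norm (xb k - x k))\<^sup>2 \<le> \<eta> * Lk / 2 * (norm (xb k - x k))\<^sup>2"
        by (intro mult_right_mono) auto
      moreover have "(norm (xb k - x k))\<^sup>2 = (gam k)\<^sup>2 * (norm (d k))\<^sup>2"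
        by (simp add: xb_def power_mult_distrib)
      moreover have "grad (x k) \<bullet> (xb k - x k) = - gam k * G"
        by (simp add: xb_def G_def)
      ultimately show ?thesis using e1 by simp
    qed
    show ?thesis
    proof (cases "d k = 0")
      case True
      then have "G = 0" by (simp add: G_def)
      then have "h = 0" using h0 hG by simp
      then have "h' \<le> \<eta> / 2 * h" using hh' by simp
      then show ?thesis by (simp add: h_def h'_def)
    next
      case False
      then have n0: "(norm (d k))\<^sup>2 > 0" by simp
      define q where "q = G / (Lk * (norm (d k))\<^sup>2)"
      have gq: "gam k = min q 1" by (simp add: gam_def q_def G_def Lk_def)
      show ?thesis
      proof (cases "q \<ge> 1")
        case True
        then have g1: "gam k = 1" using gq by simp
        have "Lk * (norm (d k))\<^sup>2 \<le> G" using True Lk0 n0 by (simp add: q_def field_simps)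
        then have "\<eta> * Lk / 2 * (norm (d k))\<^sup>2 \<le> \<eta> / 2 * G" using eta by simp
        then have "f (xb k) \<le> f (x k) - (1 - \<eta> / 2) * G" using desc g1 by (simp add: algebra_simps)
        moreover have "(1 - \<eta> / 2) * h \<le> (1 - \<eta> / 2) * G" using hG eta by (intro mult_left_mono) auto
        ultimately have "h' \<le> \<eta> / 2 * h" using hb by (simp add: h_def algebra_simps)
        then show ?thesis by (simp add: h_def h'_def)
      next
        case False
        then have gq': "gam k = q" using gq by simp
        have "gam k * G - \<eta> * Lk / 2 * ((gam k)\<^sup>2 * (norm (d k))\<^sup>2) = (1 - \<eta> / 2) * (G * G / (Lk * (norm (d k))\<^sup>2))"
          unfolding gq' q_def using Lk0 n0 by (simp add: field_simps power2_eq_square)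
        moreover have "G * G / (Lk * (norm (d k))\<^sup>2) \<ge> \<alpha> * ng / (4 * L) * h"
        proof -
          have ng0: "0 \<le> ng" by (simp add: ng_def)
          have "\<alpha> * ng / (4 * L) * h \<le> \<alpha> * ng / (4 * Lk) * h"
            using Lk0 LkL alpha_pos ng0 h0 by (intro mult_right_mono divide_left_mono) auto
          also have "\<dots> \<le> \<alpha> * ng / (4 * Lk) * G"
            using hG Lk0 alpha_pos ng0 by (intro mult_left_mono) auto
          also have "\<dots> = (\<alpha> / 4 * (norm (d k))\<^sup>2 * ng) * G / (Lk * (norm (d k))\<^sup>2)"
            using n0 Lk0 by (simp add: field_simps)
          also have "\<dots> \<le> G * G / (Lk * (norm (d k))\<^sup>2)"
            using Gsc h0 hG Lk0 n0 by (intro divide_right_mono mult_right_mono) auto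
          finally show ?thesis .
        qed
        moreover have "0 \<le> 1 - \<eta> / 2" using eta by simp
        ultimately have "(1 - \<eta> / 2) * (\<alpha> * ng / (4 * L) * h) \<le> gam k * G - \<eta> * Lk / 2 * ((gam k)\<^sup>2 * (norm (d k))\<^sup>2)"
          by (metis mult_left_mono)
        moreover have "(1 - \<eta> / 2) * \<alpha> * ng / (4 * L) * h = (1 - \<eta> / 2) * (\<alpha> * ng / (4 * L) * h)" by simp
        ultimately have PT: "(1 - \<eta> / 2) * \<alpha> * ng / (4 * L) * h \<le> gam k * G - \<eta> * Lk / 2 * ((gam k)\<^sup>2 * (norm (d k))\<^sup>2)"
          by simp
        define P where "P = (1 - \<eta> / 2) * \<alpha> * ng / (4 * L) * h"
        define T where "T = gam k * G - \<eta> * Lk / 2 * ((gam k)\<^sup>2 * (norm (d k))\<^sup>2)"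
        have "P \<le> T" using PT by (simp add: P_def T_def)
        moreover have "f (xb k) \<le> f (x k) - T" using desc by (simp add: T_def)
        ultimately have "h' \<le> h - P" using hb h_def by linarith
        then have "h' \<le> h - (1 - \<eta> / 2) * \<alpha> * ng / (4 * L) * h" by (simp add: P_def)
        then show ?thesis by (simp add: h_def h'_def ng_def)
      qed
    qed
  qed
  define H where "H k = f (x k) - f xstar" for k
  have Hmono: "H (Suc k) \<le> H k" for k using mono[of k] by (simp add: H_def)
  have H0: "0 \<le> H k" for k using hnn[of k] by (simp add: H_def)
  have Hbase: "H 0 \<le> L * (diameter A)\<^sup>2 / 2" using base by (simp add: H_def)
  have key': "H (Suc k) \<le> \<eta> / 2 * H k
       \<or> H (Suc k) \<le> H k - (1 - \<eta> / 2) * \<alpha> * norm (grad (x k)) / (4 * L) * H k"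
    if "Lt (Suc k) \<le> \<eta> * Lt k" for k
    using key[OF that] by (simp add: H_def)
  have eta2: "0 < 1 - \<eta> / 2" "0 < \<eta> / 2" using eta by auto
  show ?thesis
  proof (intro conjI allI impI)
    fix \<mu> :: real
    assume mu: "\<mu> > 0" and scf: "strongly_convex_fun \<mu> f grad"
    fix k assume Ik: "Lt (Suc k) \<le> \<eta> * Lt k"
    define s where "s = sqrt (\<eta> / 2)"
    define c where "c = 1 / (1 - s)"
    define M2 where "M2 = 18 * (1 / (1 + sqrt (\<eta> / 2)))\<^sup>2 * (1 / ((\<alpha> * sqrt \<mu>) / (8 * sqrt 2 * L))\<^sup>2)"
    define M where "M = max (L * (diameter A)\<^sup>2 / 2) M2"
    define K where "K = (1 - \<eta> / 2) * \<alpha> * sqrt (2 * \<mu>) / (4 * L)"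
    have s0: "0 \<le> s" using eta by (simp add: s_def)
    have s1: "s < 1" using eta by (simp add: s_def)
    have s2: "s\<^sup>2 = \<eta> / 2" using eta by (simp add: s_def)
    have K0: "K \<ge> 0" using eta2 alpha_pos Lp mu by (simp add: K_def)
    have M2eq: "M2 = 2304 * L\<^sup>2 / ((1 + s)\<^sup>2 * \<alpha>\<^sup>2 * \<mu>)"
      using alpha_pos mu Lp s0 unfolding M2_def s_def[symmetric]
      by (simp add: field_simps power_mult_distrib)
    have M2pos: "M2 > 0" unfolding M2eq using Lp alpha_pos mu s0 by (simp add: add_nonneg_pos)
    have MM2: "M2 \<le> M" by (simp add: M_def)
    have Mpos: "M > 0" using M2pos MM2 by linarith
    have Kc: "K * c = (1 + s) * \<alpha> * sqrt (2 * \<mu>) / (4 * L)"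
    proof -
      have e: "1 - \<eta> / 2 = (1 - s) * (1 + s)" using s2 by (simp add: algebra_simps power2_eq_square)
      have "1 - s \<noteq> 0" using s1 by simp
      then show ?thesis using Lp unfolding K_def c_def e by (simp add: field_simps)
    qed
    have KcM2: "(K * c)\<^sup>2 * M2 = 288"
    proof -
      have "((1 + s) * \<alpha> * sqrt (2 * \<mu>))\<^sup>2 = (1 + s)\<^sup>2 * \<alpha>\<^sup>2 * (2 * \<mu>)"
        using mu by (simp add: power_mult_distrib)
      then have "(K * c)\<^sup>2 = (1 + s)\<^sup>2 * \<alpha>\<^sup>2 * (2 * \<mu>) / (4 * L)\<^sup>2"
        unfolding Kc by (simp add: power_divide)
      then show ?thesis unfolding M2eq using Lp alpha_pos mu s0
        by (simp add: field_simps power_mult_distrib)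
    qed
    have W: "36 \<le> K\<^sup>2 * M * c\<^sup>2"
    proof -
      have "(K * c)\<^sup>2 * M2 \<le> (K * c)\<^sup>2 * M" using MM2 by (intro mult_left_mono) auto
      then show ?thesis using KcM2 by (simp add: power_mult_distrib algebra_simps)
    qed
    have gn: "sqrt (2 * \<mu>) * sqrt (H j) \<le> norm (grad (x j))" for j
    proof -
      define gg where "gg = grad (x j)"
      define rr where "rr = norm (xstar - x j)"
      have "f xstar \<ge> f (x j) + gg \<bullet> (xstar - x j) + \<mu> / 2 * rr\<^sup>2"
        using scf unfolding strongly_convex_fun_def gg_def rr_def by blast
      moreover have "- (gg \<bullet> (xstar - x j)) \<le> norm gg * rr"
        unfolding rr_def by (metis inner_minus_right norm_cauchy_schwarz norm_minus_commute minus_diff_eq)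
      ultimately have "H j \<le> norm gg * rr - \<mu> / 2 * rr\<^sup>2" by (simp add: H_def)
      also have "\<dots> \<le> (norm gg)\<^sup>2 / (2 * \<mu>)"
      proof -
        have "0 \<le> (norm gg - \<mu> * rr)\<^sup>2" by simp
        then show ?thesis using mu by (simp add: field_simps power2_eq_square)
      qed
      finally have "2 * \<mu> * H j \<le> (norm gg)\<^sup>2" using mu by (simp add: field_simps)
      then have "sqrt (2 * \<mu> * H j) \<le> sqrt ((norm gg)\<^sup>2)" by (rule real_sqrt_le_mono)
      then show ?thesis by (simp add: real_sqrt_mult gg_def)
    qed
    have tr: "H k \<le> M * c\<^sup>2 / (real (card {j. j < k \<and> Lt (Suc j) \<le> \<eta> * Lt j}) + c)\<^sup>2"
    proof (rule track[of H "\<lambda>n. M * c\<^sup>2 / (real n + c)\<^sup>2" "\<lambda>j. Lt (Suc j) \<le> \<eta> * Lt j" k])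
      have "1 \<le> c" using s0 s1 by (simp add: c_def le_divide_eq)
      then show "H 0 \<le> M * c\<^sup>2 / (real 0 + c)\<^sup>2" using Hbase by (simp add: M_def)
    next
      show "H (Suc j) \<le> H j" for j by (rule Hmono)
    next
      fix j n assume Ij: "Lt (Suc j) \<le> \<eta> * Lt j" and Hb: "H j \<le> M * c\<^sup>2 / (real n + c)\<^sup>2"
      show "H (Suc j) \<le> M * c\<^sup>2 / (real (Suc n) + c)\<^sup>2"
      proof -
        have "H (Suc j) \<le> s\<^sup>2 * H j \<or> H (Suc j) \<le> H j - K * H j * sqrt (H j)"
        proof -
          have "K * H j * sqrt (H j) \<le> (1 - \<eta> / 2) * \<alpha> * norm (grad (x j)) / (4 * L) * H j"
          proof -
            have "K * sqrt (H j) = (1 - \<eta> / 2) * \<alpha> / (4 * L) * (sqrt (2 * \<mu>) * sqrt (H j))"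
              by (simp add: K_def)
            also have "\<dots> \<le> (1 - \<eta> / 2) * \<alpha> / (4 * L) * norm (grad (x j))"
              using gn[of j] eta2 alpha_pos Lp by (intro mult_left_mono) auto
            finally have "K * sqrt (H j) * H j \<le> (1 - \<eta> / 2) * \<alpha> / (4 * L) * norm (grad (x j)) * H j"
              using H0[of j] by (intro mult_right_mono) auto
            then show ?thesis by (simp add: algebra_simps)
          qed
          then show ?thesis using key'[OF Ij] s2 by auto
        qed
        then have "H (Suc j) \<le> M * c\<^sup>2 / (real (Suc n) + c)\<^sup>2"
          by (intro rate_i[OF s0 s1 c_def Mpos K0 W H0 Hmono Hb])
        then show ?thesis .
      qed
    qed
    then show "let t = card {j. j < k \<and> Lt (Suc j) \<le> \<eta> * Lt j};
               c = 1 / (1 - sqrt (\<eta> / 2))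
           in f (x k) - f xstar \<le>
              max (L * (diameter A)\<^sup>2 / 2)
                  (18 * (1 / (1 + sqrt (\<eta> / 2)))\<^sup>2
                      * (1 / ((\<alpha> * sqrt \<mu>) / (8 * sqrt 2 * L))\<^sup>2))
              * c\<^sup>2 / (real t + c)\<^sup>2"
      unfolding Let_def H_def M_def M2_def c_def s_def .
  next
    fix g0 :: real
    assume g0: "g0 > 0" and gb: "\<forall>y\<in>convex hull A. g0 \<le> norm (grad y)"
    fix k assume Ik: "Lt (Suc k) \<le> \<eta> * Lt k"
    define q where "q = max (\<eta> / 2) (1 - (1 - \<eta> / 2) * \<alpha> * g0 / (8 * L))"
    have q0: "0 \<le> q" using eta2 by (simp add: q_def)
    have tr: "H k \<le> L * (diameter A)\<^sup>2 / 2 * q ^ (card {j. j < k \<and> Lt (Suc j) \<le> \<eta> * Lt j})"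
    proof (rule track[of H "\<lambda>n. L * (diameter A)\<^sup>2 / 2 * q ^ n" "\<lambda>j. Lt (Suc j) \<le> \<eta> * Lt j" k])
      show "H 0 \<le> L * (diameter A)\<^sup>2 / 2 * q ^ 0" using Hbase by simp
    next
      show "H (Suc j) \<le> H j" for j by (rule Hmono)
    next
      fix j n assume Ij: "Lt (Suc j) \<le> \<eta> * Lt j" and Hb: "H j \<le> L * (diameter A)\<^sup>2 / 2 * q ^ n"
      have "H (Suc j) \<le> q * H j"
      proof -
        have ng: "g0 \<le> norm (grad (x j))" using gb xin by blast
        have "(1 - \<eta> / 2) * \<alpha> * g0 / (8 * L) \<le> (1 - \<eta> / 2) * \<alpha> * norm (grad (x j)) / (4 * L)"
        proof -
          have P: "0 \<le> (1 - \<eta> / 2) * \<alpha> / L" using eta2 alpha_pos Lp by simp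
          have "g0 / 8 \<le> norm (grad (x j)) / 4" using ng g0 by simp
          then have "(1 - \<eta> / 2) * \<alpha> / L * (g0 / 8) \<le> (1 - \<eta> / 2) * \<alpha> / L * (norm (grad (x j)) / 4)"
            using P by (rule mult_left_mono)
          then show ?thesis by (simp add: field_simps)
        qed
        then have YX: "(1 - \<eta> / 2) * \<alpha> * g0 / (8 * L) * H j \<le> (1 - \<eta> / 2) * \<alpha> * norm (grad (x j)) / (4 * L) * H j"
          using H0[of j] by (rule mult_right_mono)
        have a: "H j - (1 - \<eta> / 2) * \<alpha> * norm (grad (x j)) / (4 * L) * H j
                 \<le> (1 - (1 - \<eta> / 2) * \<alpha> * g0 / (8 * L)) * H j"
        proof -
          define X where "X = (1 - \<eta> / 2) * \<alpha> * norm (grad (x j)) / (4 * L)"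
          define Y where "Y = (1 - \<eta> / 2) * \<alpha> * g0 / (8 * L)"
          have "Y * H j \<le> X * H j" using YX by (simp add: X_def Y_def)
          then have "H j - X * H j \<le> (1 - Y) * H j" by (simp add: left_diff_distrib)
          then show ?thesis by (simp add: X_def Y_def)
        qed
        have b: "(1 - (1 - \<eta> / 2) * \<alpha> * g0 / (8 * L)) * H j \<le> q * H j"
          using H0[of j] by (intro mult_right_mono) (auto simp: q_def)
        have c: "\<eta> / 2 * H j \<le> q * H j"
          using H0[of j] by (intro mult_right_mono) (auto simp: q_def)
        show ?thesis using key'[OF Ij] a b c by linarith
      qed
      also have "\<dots> \<le> q * (L * (diameter A)\<^sup>2 / 2 * q ^ n)" using Hb q0 by (rule mult_left_mono)
      finally show "H (Suc j) \<le> L * (diameter A)\<^sup>2 / 2 * q ^ Suc n" by (simp add: algebra_simps)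
    qed
    then show "let t = card {j. j < k \<and> Lt (Suc j) \<le> \<eta> * Lt j}
           in f (x k) - f xstar \<le>
              L * (diameter A)\<^sup>2 / 2
              * (max (\<eta> / 2) (1 - (1 - \<eta> / 2) * \<alpha> * g0 / (8 * L))) ^ t"
      unfolding Let_def H_def q_def .
  qed
qed

end
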